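(* Let $x,k,r$ be positive integers and let $p$ be a prime. Then \[ x^3 + (x+1)^3 + \cdots + (x+k-1)^3 = (p^r)^2 \] holds if and only if $(x,k,p,r) = (p^{2c},1,p,3c)$ for some positive integer $c$, or $(x,k,p,r) = (1,2,3,1)$. *)

theory Defs
  imports "HOL-Computational_Algebra.Primes"
begin

end

theory Submission
  imports Defs
begin

lemma consec_dvd:
  fixes p y n :: nat
  assumes "prime p" "p ^ n dvd y * (y + 1)"
  shows "p ^ n dvd y \<or> p ^ n dvd (y + 1)"
proof (cases "n = 0")
  case True then show ?thesis by simp
next
  case False
  show ?thesis
  proof (cases "p dvd y")
    case True
    have "\<not> p dvd (y + 1)"
    proof
      assume "p dvd (y + 1)"
      with True have "p dvd 1" by (metis add_diff_cancel_left' dvd_diff_nat)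
      with assms(1) show False by auto
    qed
    then have "p ^ n dvd y"
      using prime_power_dvd_multD[of p n "y+1" y] assms False
      by (simp add: mult.commute)
    then show ?thesis by simp
  next
    case False
    then have "p ^ n dvd (y+1)"
      using prime_power_dvd_multD[of p n y "y+1"] assms \<open>n \<noteq> 0\<close> by simp
    then show ?thesis by simp
  qed
qed

lemma sumA: "2 * (\<Sum>i<k. (Suc y + i)) + (y + 1) * y = (y + 1 + k) * (y + k)"
  by (induction k) (auto simp: algebra_simps)

lemma sumcube: "(\<Sum>i<k. (Suc y + i) ^ 3) =
   (\<Sum>i<k. (Suc y + i)) * ((\<Sum>i<k. (Suc y + i)) + y * (y + 1))"
proof (induction k)
  case 0 then show ?case by simp
next
  case (Suc k)
  define A where "A = (\<Sum>i<k. (Suc y + i))"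
  have h: "2 * A + (y + 1) * y = (y + 1 + k) * (y + k)" using sumA A_def by simp
  have "(\<Sum>i<Suc k. (Suc y + i) ^ 3) = A * (A + y*(y+1)) + (Suc y + k)^3"
    using Suc A_def by simp
  also have "\<dots> = (A + (Suc y + k)) * ((A + (Suc y + k)) + y*(y+1))"
  proof -
    have e: "(Suc y + k)^3 = (Suc y + k) * (2 * A + (y + 1) * y) + (Suc y + k)*(Suc y + k)"
      by (subst h) (simp add: algebra_simps power3_eq_cube)
    show ?thesis by (simp only: e) (simp add: algebra_simps)
  qed
  finally show ?case using A_def by simp
qed

lemma sum_ge:
  fixes x k :: nat
  shows "k \<ge> 2 \<Longrightarrow> (\<Sum>i<k. (x + i)) \<ge> 2 * x + 1"
proof (induction k rule: dec_induct)
  case base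
  then show ?case by (simp add: numeral_2_eq_2)
next
  case (step n)
  then show ?case by simp
qed

theorem theorem1:
  fixes x k r p :: nat
  assumes "x > 0" and "k > 0" and "r > 0" and "prime p"
  shows "(\<Sum>i<k. (x + i) ^ 3) = (p ^ r) ^ 2 \<longleftrightarrow>
         ((\<exists>c::nat. c > 0 \<and> x = p ^ (2 * c) \<and> k = 1 \<and> r = 3 * c)
          \<or> (x = 1 \<and> k = 2 \<and> p = 3 \<and> r = 1))"
proof
  assume eq: "(\<Sum>i<k. (x + i) ^ 3) = (p ^ r) ^ 2"
  have p1: "p > 1" using assms(4) prime_gt_1_nat by blast
  show "(\<exists>c::nat. c > 0 \<and> x = p ^ (2 * c) \<and> k = 1 \<and> r = 3 * c)
          \<or> (x = 1 \<and> k = 2 \<and> p = 3 \<and> r = 1)"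
  proof (cases "k = 1")
    case True
    then have "x ^ 3 = p ^ (2 * r)" using eq by (simp add: power_mult[symmetric] mult.commute)
    moreover have "x dvd x ^ 3" by simp
    ultimately have "x dvd p ^ (2*r)" by simp
    then obtain j where j: "x = p ^ j" using divides_primepow_nat[OF assms(4)] by auto
    then have "p ^ (3 * j) = p ^ (2 * r)" using \<open>x ^ 3 = _\<close>
      by (simp add: power_mult[symmetric] mult.commute)
    then have "3 * j = 2 * r" using p1 power_inject_exp by blast
    then have "even j" by presburger
    then obtain c where "j = 2 * c" by blast
    with \<open>3 * j = 2 * r\<close> have "r = 3 * c" by simp
    with assms(3) have "c > 0" by simp
    then show ?thesis using True j \<open>j = 2*c\<close> \<open>r = 3*c\<close> by blast
  next
    case False
    with assms(2) have k2: "k \<ge> 2" by simp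
    obtain y where y: "x = Suc y" using assms(1) gr0_implies_Suc by blast
    define A where "A = (\<Sum>i<k. (Suc y + i))"
    define B where "B = A + y * (y + 1)"
    have "(\<Sum>i<k. (x+i)^3) = A * B" unfolding A_def B_def y by (rule sumcube)
    then have AB: "A * B = p ^ (2 * r)"
      using eq by (simp add: power_mult[symmetric] mult.commute)
    have Age: "A \<ge> 2 * x + 1" using sum_ge[OF k2, of x] A_def y by simp
    have "A dvd p ^ (2*r)" using AB by (metis dvd_triv_left)
    then obtain s where s: "A = p ^ s" using divides_primepow_nat[OF assms(4)] by auto
    have "A * A \<le> A * B" using B_def by simp
    then have "p ^ (2 * s) \<le> p ^ (2 * r)" using AB s by (simp add: power_add[symmetric] mult_2)
    then have "s \<le> r" using p1 by simp
    have "B = p ^ (2 * r - s)"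
    proof -
      have "p ^ s * p ^ (2*r - s) = p ^ (2 * r)" using \<open>s \<le> r\<close> by (simp add: power_add[symmetric])
      then have "p ^ s * B = p ^ s * p ^ (2*r - s)" using AB s by simp
      moreover have "p ^ s \<noteq> 0" using p1 by simp
      ultimately show ?thesis using p1 by auto
    qed
    then have "A dvd B" using s \<open>s \<le> r\<close> by (simp add: le_imp_power_dvd)
    then have "A dvd y * (y + 1)" using B_def by (simp add: dvd_add_right_iff)
    then have "A dvd y \<or> A dvd (y + 1)" using consec_dvd[OF assms(4)] s by simp
    moreover have "\<not> A dvd (y + 1)" using Age y by (auto dest: dvd_imp_le)
    ultimately have "A dvd y" by blast
    then have y0: "y = 0" using Age y by (auto dest: dvd_imp_le)
    then have x1: "x = 1" using y by simp
    have "A * A = p ^ r * p ^ r" using AB B_def y0 by (simp add: power_add[symmetric] mult_2)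
    then have "p ^ (2*s) = p ^ (2*r)" using s by (simp add: power_add[symmetric] mult_2)
    then have "s = r" using p1 power_inject_exp by simp
    then have Ar: "A = p ^ r" using s by simp
    have "2 * A + (0+1)*0 = (0+1+k)*(0+k)" using sumA[where k=k and y=0] unfolding A_def y0 .
    then have twoA: "2 * A = k * (k + 1)" by (simp add: algebra_simps)
    have "A dvd k * (k+1)" using twoA by (metis dvd_triv_right)
    then have "A dvd k \<or> A dvd (k + 1)" using consec_dvd[OF assms(4)] Ar by simp
    moreover have "\<not> A dvd k"
    proof
      assume "A dvd k"
      then have "A \<le> k" using k2 by (simp add: dvd_imp_le)
      then have "A * (k+1) \<le> k * (k+1)" by (rule mult_right_mono) simp_all
      moreover have "A * 3 \<le> A * (k+1)" using k2 by simp
      moreover have "A > 0" using Age by simp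
      ultimately show False using twoA by linarith
    qed
    ultimately obtain m where m: "k + 1 = A * m" by (auto elim: dvdE)
    then have "2 * A = A * (k * m)" using twoA by (simp add: algebra_simps)
    then have "k * m = 2" using Age by simp
    moreover have "m \<noteq> 0" using \<open>k * m = 2\<close> by (cases m) auto
    ultimately have "k \<le> 2" by (metis mult_le_mono2 One_nat_def Suc_leI mult.right_neutral zero_less_iff_neq_zero)
    then have k2': "k = 2" using k2 by simp
    then have "m = 1" using \<open>k * m = 2\<close> by simp
    then have "p ^ r = 3" using m Ar k2' by simp
    moreover have "p dvd p ^ r" using assms(3) by (simp add: dvd_power)
    ultimately have "p dvd 3" by simp
    then have "p \<le> 3" by (simp add: dvd_imp_le)
    moreover have "p \<noteq> 2" using \<open>p dvd 3\<close> by auto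
    ultimately have p3: "p = 3" using p1 by linarith
    then have "r = 1" using \<open>p ^ r = 3\<close> power_inject_exp[of "3::nat" r 1] by simp
    then show ?thesis using x1 k2' p3 by simp
  qed
next
  assume "(\<exists>c::nat. c > 0 \<and> x = p ^ (2 * c) \<and> k = 1 \<and> r = 3 * c)
          \<or> (x = 1 \<and> k = 2 \<and> p = 3 \<and> r = 1)"
  then show "(\<Sum>i<k. (x + i) ^ 3) = (p ^ r) ^ 2"
  proof
    assume "\<exists>c::nat. c > 0 \<and> x = p ^ (2 * c) \<and> k = 1 \<and> r = 3 * c"
    then obtain c where "x = p ^ (2 * c)" "k = 1" "r = 3 * c" by blast
    then show ?thesis by (simp add: power_mult[symmetric] mult.commute)
  next
    assume "x = 1 \<and> k = 2 \<and> p = 3 \<and> r = 1"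
    then show ?thesis by (simp add: eval_nat_numeral lessThan_Suc)
  qed
qed

end
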